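(* Let $n\ge 3$, let $a_0,\ldots,a_{n-1}$ be indeterminates over $\mathbb{Q}$, $f=x^n+a_{n-1}x^{n-1}+\cdots+a_0$, and \[f_1(x,y)=\frac{f(y)-f(x)}{y-x},\qquad f_3(x,y)=\frac{f(y)-2f\left(\frac{x+y}{2}\right)+f(x)}{\frac{(y-x)^2}{2}}.\] Let $g_1(x,y)=f_1(x-y,x+y)$, $g_3(x,y)=f_3(x-y,x+y)$ and $G=\operatorname{res}(g_1,g_3,y)$. For each integer $m$ put $\varphi_m(x)=f^{(m)}(x)/m!$ if $1\le m\le n$ and $\varphi_m=0$ if $m\le0$ or $m>n$; let $M$ be the infinite matrix with entries $M_{2s-1,l}=\varphi_{2(l-s)+2}$, $M_{2s,l}=\varphi_{2(l-s)+1}$ ($s,l\ge1$) and $H$ its $(n-2)$th leading principal minor. Then $G=H^2$.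
   Context: $f^{(m)}$ is the $m$th derivative of $f$ with respect to $x$; $\operatorname{res}(\cdot,\cdot,y)$ is the Sylvester resultant with respect to $y$. *)

theory Defs
  imports "HOL-Library.Poly_Mapping" "Subresultants.Resultant_Prelim"
          "Jordan_Normal_Form.Determinant"
begin

(* Q[a_0, a_1, ...]: polynomials over Q in countably many indeterminates a_i *)
type_synonym qpoly = "(nat \<Rightarrow>\<^sub>0 nat) \<Rightarrow>\<^sub>0 rat"

definition ind :: "nat \<Rightarrow> qpoly" where
  "ind i = Poly_Mapping.single (Poly_Mapping.single i 1) 1"

definition rconst :: "rat \<Rightarrow> qpoly" where
  "rconst c = Poly_Mapping.single 0 c"

definition genpoly :: "nat \<Rightarrow> qpoly poly" where
  "genpoly n = monom 1 n + (\<Sum>i<n. monom (ind i) i)"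

(* Bivariate polynomials: type qpoly poly poly, outer variable y, inner variable x. *)
definition Xv :: "qpoly poly poly" where "Xv = [:[:0, 1:]:]"
definition Yv :: "qpoly poly poly" where "Yv = [:0, 1:]"

definition eval1 :: "qpoly poly \<Rightarrow> qpoly poly poly \<Rightarrow> qpoly poly poly" where
  "eval1 p A = poly (map_poly (\<lambda>c. [:[:c:]:]) p) A"

definition subst2 :: "qpoly poly poly \<Rightarrow> qpoly poly poly \<Rightarrow> qpoly poly poly \<Rightarrow> qpoly poly poly" where
  "subst2 P A B = poly (map_poly (\<lambda>p. eval1 p A) P) B"

definition phi :: "nat \<Rightarrow> qpoly poly \<Rightarrow> int \<Rightarrow> qpoly poly" where
  "phi n f m = (if 1 \<le> m \<and> m \<le> int n
     then smult (rconst (1 / of_nat (fact (nat m)))) ((pderiv ^^ nat m) f) else 0)"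

(* entries of the infinite matrix M, 1-indexed rows r and columns l *)
definition Mentry :: "nat \<Rightarrow> qpoly poly \<Rightarrow> nat \<Rightarrow> nat \<Rightarrow> qpoly poly" where
  "Mentry n f r l = (if odd r
     then phi n f (2 * (int l - int ((r + 1) div 2)) + 2)
     else phi n f (2 * (int l - int (r div 2)) + 1))"

definition Mlead :: "nat \<Rightarrow> qpoly poly \<Rightarrow> nat \<Rightarrow> qpoly poly mat" where
  "Mlead n f k = mat k k (\<lambda>(i, j). Mentry n f (i + 1) (j + 1))"

end

theory Submission
  imports Defs
begin

lemma eval1_pCons: "eval1 (pCons a g) A = [:[:a:]:] + A * eval1 g A"
  unfolding eval1_def by (cases "a = 0 \<and> g = 0") auto

lemma eval1_0[simp]: "eval1 0 A = 0" unfolding eval1_def by simp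

interpretation cc: comm_ring_hom "\<lambda>c::qpoly. [:[:c:]:]"
  by unfold_locales auto

interpretation mcc: map_poly_comm_ring_hom "\<lambda>c::qpoly. [:[:c:]:]" ..

lemma eval1_add: "eval1 (p + q) A = eval1 p A + eval1 q A"
  unfolding eval1_def by (simp add: mcc.hom_add)
lemma eval1_mult: "eval1 (p * q) A = eval1 p A * eval1 q A"
  unfolding eval1_def by (simp add: mcc.hom_mult)
lemma eval1_minus: "eval1 (p - q) A = eval1 p A - eval1 q A"
  unfolding eval1_def by (simp add: mcc.hom_minus)
lemma eval1_const: "eval1 [:c:] A = [:[:c:]:]"
  by (simp add: eval1_pCons)
lemma eval1_X: "eval1 [:0,1:] A = A"
  unfolding eval1_def by simp
lemma eval1_1: "eval1 1 A = 1"
  unfolding eval1_def by simp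

lemma eval1_hom: "comm_ring_hom (\<lambda>p. eval1 p A)"
  by unfold_locales (auto simp: eval1_add eval1_mult eval1_1)

lemma subst2_hom: "comm_ring_hom (\<lambda>P. subst2 P A B)"
proof -
  interpret e: comm_ring_hom "\<lambda>p. eval1 p A" by (rule eval1_hom)
  interpret me: map_poly_comm_ring_hom "\<lambda>p. eval1 p A" ..
  show ?thesis unfolding subst2_def
    by unfold_locales (auto simp: me.hom_add me.hom_mult)
qed

lemma subst2_X: "subst2 Xv A B = A" unfolding subst2_def Xv_def by (simp add: eval1_X)
lemma subst2_Y: "subst2 Yv A B = B" unfolding subst2_def Yv_def by (simp add: eval1_X eval1_1)
lemma subst2_C: "subst2 [:[:c:]:] A B = [:[:c:]:]" unfolding subst2_def by (cases "c = 0") (simp_all add: eval1_const)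

lemma subst2_eval1: "subst2 (eval1 f P) A B = eval1 f (subst2 P A B)"
proof -
  interpret s: comm_ring_hom "\<lambda>P. subst2 P A B" by (rule subst2_hom)
  show ?thesis
    by (induct f) (simp_all add: eval1_pCons s.hom_add s.hom_mult subst2_C)
qed

definition tay :: "nat \<Rightarrow> 'a::comm_semiring_1 poly \<Rightarrow> 'a poly" where
  "tay k f = (\<Sum>d\<le>degree f. monom (of_nat ((d+k) choose k) * coeff f (d+k)) d)"

lemma coeff_tay: "coeff (tay k f) d = of_nat ((d+k) choose k) * coeff f (d+k)"
proof -
  have "coeff (tay k f) d = (\<Sum>x\<le>degree f. if x = d then of_nat ((x+k) choose k) * coeff f (x+k) else 0)"
    unfolding tay_def coeff_sum coeff_monom by (auto intro: sum.cong)
  also have "\<dots> = of_nat ((d+k) choose k) * coeff f (d+k)"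
    by (cases "d \<le> degree f") (auto simp: coeff_eq_0)
  finally show ?thesis .
qed

lemma tay_0[simp]: "tay 0 f = f"
  by (rule poly_eqI) (simp add: coeff_tay)

lemma tay_zero[simp]: "tay k 0 = 0"
  by (rule poly_eqI) (simp add: coeff_tay)

lemma tay_pCons: "tay (Suc k) (pCons a g) = pCons 0 (tay (Suc k) g) + tay k g"
proof (rule poly_eqI)
  fix d show "coeff (tay (Suc k) (pCons a g)) d = coeff (pCons 0 (tay (Suc k) g) + tay k g) d"
  proof (cases d)
    case 0 then show ?thesis by (simp add: coeff_tay)
  next
    case (Suc e)
    have "(Suc (Suc (e + k)) choose Suc k) = (Suc (e+k) choose k) + (Suc (e + k) choose Suc k)"
      by simp
    then show ?thesis using Suc by (simp add: coeff_tay algebra_simps)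
  qed
qed

lemma taylor_lin:
  "coeff (eval1 f [:[:0,1:], [:c:]:]) k = smult (c^k) (tay k f)"
proof (induct f arbitrary: k)
  case 0 then show ?case by simp
next
  case (pCons a g)
  show ?case
  proof (cases k)
    case 0
    then show ?thesis using pCons(2)[of 0]
      by (simp add: eval1_pCons)
  next
    case (Suc j)
    then show ?thesis using pCons(2)[of j] pCons(2)[of k]
      by (simp add: eval1_pCons tay_pCons algebra_simps smult_add_right)
  qed
qed


lemma rconst_mult: "rconst a * rconst b = rconst (a * b)"
  by (simp add: rconst_def mult_single)
lemma rconst_of_nat: "rconst (of_nat n) = of_nat n"
  by (simp add: rconst_def)
lemma rconst_numeral: "rconst (numeral n) = numeral n"
  by (simp add: rconst_def)
lemma rconst_1: "rconst 1 = 1"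
  by (simp add: rconst_def)
lemma half2: "rconst (1/2) * 2 = 1"
proof -
  have "rconst (1/2) * 2 = rconst (1/2) * rconst 2" by (simp add: rconst_numeral)
  also have "\<dots> = 1" by (simp add: rconst_mult rconst_1)
  finally show ?thesis .
qed

lemma Yv_mult: "Yv * P = pCons 0 P"
  unfolding Yv_def by simp

lemma neg1_poly: "[:-1:] = (-1 :: 'a::comm_ring_1 poly)"
  by (metis minus_pCons pCons_one minus_zero)

lemma AB_facts:
  "Xv - Yv = [:[:0,1:], [:-1:]:]" "Xv + Yv = [:[:0,1:], [:1:]:]" "Xv = [:[:0,1:], [:0:]:]"
  "(Xv + Yv) - (Xv - Yv) = 2 * Yv"
  unfolding Xv_def Yv_def by (simp_all add: neg1_poly mult_2)

lemma half_AB: "smult [:rconst (1/2):] ((Xv - Yv) + (Xv + Yv)) = Xv"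
proof -
  have "(Xv - Yv) + (Xv + Yv) = Xv + Xv" by (simp add: algebra_simps)
  also have "\<dots> = smult 2 Xv" by (simp only: one_add_one[symmetric] smult_add_left smult_1_left)
  finally have "(Xv - Yv) + (Xv + Yv) = smult 2 Xv" .
  moreover have "[:rconst (1/2):] * 2 = (1 :: qpoly poly)"
    by (simp add: numeral_poly[where 'a=qpoly] half2 mult.commute[of 2])
  ultimately show ?thesis by (simp add: mult.assoc[symmetric])
qed


lemma two_mult: "(2::'a::comm_ring_1 poly) * p = smult 2 p"
  by (simp only: one_add_one[symmetric] smult_add_left smult_1_left distrib_right mult_1)

lemma two_cancel: "(2::qpoly poly) * x = 2 * y \<Longrightarrow> x = y"
  by simp

lemma G1_coeff:
  assumes "(Yv - Xv) * f1 = eval1 f Yv - eval1 f Xv"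
  shows "coeff (subst2 f1 (Xv - Yv) (Xv + Yv)) k = (if even k then tay (Suc k) f else 0)"
proof -
  interpret s: comm_ring_hom "\<lambda>P. subst2 P (Xv - Yv) (Xv + Yv)" by (rule subst2_hom)
  define G where "G = subst2 f1 (Xv - Yv) (Xv + Yv)"
  have "subst2 ((Yv - Xv) * f1) (Xv - Yv) (Xv + Yv) = subst2 (eval1 f Yv - eval1 f Xv) (Xv - Yv) (Xv + Yv)"
    using assms by (rule arg_cong)
  then have "((Xv + Yv) - (Xv - Yv)) * G = eval1 f (Xv + Yv) - eval1 f (Xv - Yv)"
    unfolding G_def s.hom_mult s.hom_minus subst2_eval1 subst2_X subst2_Y .
  then have "2 * (Yv * G) = eval1 f (Xv + Yv) - eval1 f (Xv - Yv)"
    unfolding AB_facts(4) by (simp add: mult.assoc)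
  then have "smult 2 (pCons 0 G) = eval1 f [:[:0,1:], [:1:]:] - eval1 f [:[:0,1:], [:-1:]:]"
    unfolding AB_facts(1,2) Yv_mult two_mult .
  then have "coeff (smult 2 (pCons 0 G)) (Suc k) = coeff (eval1 f [:[:0,1:], [:1:]:] - eval1 f [:[:0,1:], [:-1:]:]) (Suc k)"
    by (rule arg_cong)
  then have "2 * coeff G k = smult (1^Suc k) (tay (Suc k) f) - smult ((-1)^Suc k) (tay (Suc k) f)"
    unfolding coeff_smult coeff_pCons_Suc coeff_diff taylor_lin .
  then have H: "2 * coeff G k = smult (1^Suc k) (tay (Suc k) f) - smult ((-1)^Suc k) (tay (Suc k) f)" .
  have "2 * coeff G k = 2 * (if even k then tay (Suc k) f else 0)"
  proof (cases "even k")
    case True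
    then have m: "(-1::qpoly)^Suc k = -1" by simp
    have "smult (1^Suc k) (tay (Suc k) f) - smult ((-1)^Suc k) (tay (Suc k) f) = tay (Suc k) f + tay (Suc k) f"
      unfolding m by simp
    also have "\<dots> = 2 * tay (Suc k) f" by (rule mult_2[symmetric])
    finally show ?thesis using H True by simp
  next
    case False
    then have m: "(-1::qpoly)^Suc k = 1" by simp
    have "smult (1^Suc k) (tay (Suc k) f) - smult ((-1)^Suc k) (tay (Suc k) f) = 0"
      unfolding m by simp
    then show ?thesis using H False by simp
  qed
  then show ?thesis unfolding G_def by (rule two_cancel)
qed


lemma subst2_smult: "subst2 (smult [:c:] P) A B = smult [:c:] (subst2 P A B)"
proof -
  interpret s: comm_ring_hom "\<lambda>P. subst2 P A B" by (rule subst2_hom)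
  have "subst2 (smult [:c:] P) A B = subst2 ([:[:c:]:] * P) A B" by simp
  also have "\<dots> = [:[:c:]:] * subst2 P A B" by (simp only: s.hom_mult subst2_C)
  also have "\<dots> = smult [:c:] (subst2 P A B)" by simp
  finally show ?thesis .
qed

lemma G3_coeff:
  assumes "(Yv - Xv)^2 * f3 =
           2 * (eval1 f Yv - 2 * eval1 f (smult [:rconst (1/2):] (Xv + Yv)) + eval1 f Xv)"
  shows "coeff (subst2 f3 (Xv - Yv) (Xv + Yv)) k = (if even k then tay (Suc (Suc k)) f else 0)"
proof -
  interpret s: comm_ring_hom "\<lambda>P. subst2 P (Xv - Yv) (Xv + Yv)" by (rule subst2_hom)
  define G where "G = subst2 f3 (Xv - Yv) (Xv + Yv)"
  have "subst2 ((Yv - Xv)^2 * f3) (Xv - Yv) (Xv + Yv) = subst2 (2 * (eval1 f Yv - 2 * eval1 f (smult [:rconst (1/2):] (Xv + Yv)) + eval1 f Xv)) (Xv - Yv) (Xv + Yv)"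
    using assms by (rule arg_cong)
  then have "((Xv + Yv) - (Xv - Yv))^2 * G = 2 * (eval1 f (Xv + Yv) - 2 * eval1 f (smult [:rconst (1/2):] ((Xv - Yv) + (Xv + Yv))) + eval1 f (Xv - Yv))"
    unfolding G_def s.hom_mult s.hom_minus s.hom_add s.hom_power s.hom_numeral subst2_eval1 subst2_X subst2_Y subst2_smult .
  then have "(2 * Yv)^2 * G = 2 * (eval1 f (Xv + Yv) - 2 * eval1 f Xv + eval1 f (Xv - Yv))"
    unfolding AB_facts(4) half_AB .
  moreover have "(2 * Yv)^2 * G = 2 * (2 * (Yv * (Yv * G)))"
    by (simp add: power2_eq_square mult_ac)
  ultimately have "2 * (2 * (Yv * (Yv * G))) = 2 * (eval1 f (Xv + Yv) - 2 * eval1 f Xv + eval1 f (Xv - Yv))"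
    by simp
  then have "smult 2 (smult 2 (pCons 0 (pCons 0 G))) = smult 2 (eval1 f [:[:0,1:], [:1:]:] - smult 2 (eval1 f Xv) + eval1 f [:[:0,1:], [:-1:]:])"
    unfolding AB_facts(1,2) Yv_mult two_mult .
  then have "smult 2 (smult 2 (pCons 0 (pCons 0 G))) = smult 2 (eval1 f [:[:0,1:], [:1:]:] - smult 2 (eval1 f [:[:0,1:], [:0:]:]) + eval1 f [:[:0,1:], [:-1:]:])"
    unfolding AB_facts(3) .
  then have "coeff (smult 2 (smult 2 (pCons 0 (pCons 0 G)))) (Suc (Suc k)) = coeff (smult 2 (eval1 f [:[:0,1:], [:1:]:] - smult 2 (eval1 f [:[:0,1:], [:0:]:]) + eval1 f [:[:0,1:], [:-1:]:])) (Suc (Suc k))"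
    by (rule arg_cong)
  then have "2 * (2 * coeff G k) = 2 * (smult (1^Suc (Suc k)) (tay (Suc (Suc k)) f) - 2 * smult (0^Suc (Suc k)) (tay (Suc (Suc k)) f) + smult ((-1)^Suc (Suc k)) (tay (Suc (Suc k)) f))"
    unfolding coeff_smult coeff_pCons_Suc coeff_diff coeff_add taylor_lin .
  then have H: "2 * coeff G k = smult (1^Suc (Suc k)) (tay (Suc (Suc k)) f) - 2 * smult (0^Suc (Suc k)) (tay (Suc (Suc k)) f) + smult ((-1)^Suc (Suc k)) (tay (Suc (Suc k)) f)"
    by (rule two_cancel)
  have "2 * coeff G k = 2 * (if even k then tay (Suc (Suc k)) f else 0)"
  proof (cases "even k")
    case True
    then have m: "(-1::qpoly)^Suc (Suc k) = 1" by simp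
    have "smult (1^Suc (Suc k)) (tay (Suc (Suc k)) f) - 2 * smult (0^Suc (Suc k)) (tay (Suc (Suc k)) f) + smult ((-1)^Suc (Suc k)) (tay (Suc (Suc k)) f) = tay (Suc (Suc k)) f + tay (Suc (Suc k)) f"
      unfolding m by simp
    also have "\<dots> = 2 * tay (Suc (Suc k)) f" by (rule mult_2[symmetric])
    finally show ?thesis using H True by simp
  next
    case False
    then have m: "(-1::qpoly)^Suc (Suc k) = -1" by simp
    have "smult (1^Suc (Suc k)) (tay (Suc (Suc k)) f) - 2 * smult (0^Suc (Suc k)) (tay (Suc (Suc k)) f) + smult ((-1)^Suc (Suc k)) (tay (Suc (Suc k)) f) = 0"
      unfolding m by simp
    then show ?thesis using H False by simp
  qed
  then show ?thesis unfolding G_def by (rule two_cancel)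
qed



lemma det_perm2:
  assumes A: "A \<in> carrier_mat n n" and p: "p permutes {0..<n}" and q: "q permutes {0..<n}"
  shows "det (mat n n (\<lambda>(i,j). A $$ (p i, q j))) = signof p * signof q * det A"
proof -
  let ?B = "mat n n (\<lambda>(i,j). A $$ (p i, j))"
  have B: "?B \<in> carrier_mat n n" by auto
  have dB: "det ?B = signof p * det A" by (rule det_permute_rows[OF A p])
  have qi: "i < n \<Longrightarrow> q i < n" for i using permutes_in_image[OF q, of i] by auto
  have pi: "i < n \<Longrightarrow> p i < n" for i using permutes_in_image[OF p, of i] by auto
  have T: "transpose_mat (mat n n (\<lambda>(i,j). A $$ (p i, q j))) = mat n n (\<lambda>(i,j). (transpose_mat ?B) $$ (q i, j))"
    by (rule eq_matI) (auto simp: qi)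
  have "det (mat n n (\<lambda>(i,j). A $$ (p i, q j))) = det (transpose_mat (mat n n (\<lambda>(i,j). A $$ (p i, q j))))"
    by (rule det_transpose[symmetric]) auto
  also have "\<dots> = signof q * det (transpose_mat ?B)"
    unfolding T by (rule det_permute_rows[OF _ q]) auto
  also have "\<dots> = signof q * det ?B" by (simp add: det_transpose[OF B])
  finally show ?thesis using dB by (simp add: ac_simps)
qed

lemma signof_sq: "(signof p :: 'a :: comm_ring_1) * signof p = 1"
  by (simp add: sign_def)

lemma det_perm2_sq:
  assumes A: "A \<in> carrier_mat n n" and p: "p permutes {0..<n}" and q: "q permutes {0..<n}"
  shows "(det (mat n n (\<lambda>(i,j). A $$ (p i, q j))))^2 = (det A)^2"
proof -
  have "(det (mat n n (\<lambda>(i,j). A $$ (p i, q j))))^2 = (signof p * signof p) * (signof q * signof q) * (det A)^2"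
    unfolding det_perm2[OF A p q] power2_eq_square by (simp add: ac_simps)
  then show ?thesis by (simp add: signof_sq)
qed


definition Emat :: "nat \<Rightarrow> nat \<Rightarrow> (nat \<Rightarrow> 'a::zero) \<Rightarrow> (nat \<Rightarrow> 'a) \<Rightarrow> 'a mat" where
  "Emat a b c1 c3 = mat (a+b) (a+b) (\<lambda>(k,l). if k < b then (if k \<le> l \<and> l - k \<le> a then c1 (a+k-l) else 0)
      else (if k - b \<le> l \<and> l \<le> k then c3 (k-l) else 0))"

lemma sylv_entry:
  fixes P Q :: "'a::comm_ring_1 poly"
  assumes dP: "degree P = 2*a" and dQ: "degree Q = 2*b"
    and cP: "\<And>i. coeff P i = (if even i then c1 (i div 2) else 0)"
    and cQ: "\<And>i. coeff Q i = (if even i then c3 (i div 2) else 0)"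
    and i: "i < 2*(a+b)" and j: "j < 2*(a+b)"
  shows "sylvester_mat P Q $$ (i,j) = (if even i = even j then Emat a b c1 c3 $$ (i div 2, j div 2) else 0)"
proof -
  have i': "i < degree P + degree Q" "j < degree P + degree Q" using i j dP dQ by auto
  have id: "i div 2 < a + b" "j div 2 < a + b" using i j by auto
  have S: "sylvester_mat P Q $$ (i,j) = (if i < 2*b then
       if i \<le> j \<and> j - i \<le> 2*a then coeff P (2*a + i - j) else 0
     else if i - 2*b \<le> j \<and> j \<le> i then coeff Q (i - j) else 0)"
    using sylvester_index_mat[OF i'] unfolding dP dQ .
  define k where "k = i div 2"
  define l where "l = j div 2"
  have id2: "k < a + b" "l < a + b" using id unfolding k_def l_def .
  have Em: "Emat a b c1 c3 $$ (k, l) = (if k < b then (if k \<le> l \<and> l - k \<le> a then c1 (a + k - l) else 0)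
      else (if k - b \<le> l \<and> l \<le> k then c3 (k - l) else 0))"
    unfolding Emat_def index_mat(1)[OF id2] by simp
  have ik: "i = 2*k + i mod 2" "j = 2*l + j mod 2" unfolding k_def l_def by simp_all
  show ?thesis
  proof (cases "even i = even j")
    case True
    then have eqm: "i mod 2 = j mod 2" by presburger
    have c1: "(i < 2*b) = (k < b)" using ik by arith
    have c2: "(i \<le> j \<and> j - i \<le> 2*a) = (k \<le> l \<and> l - k \<le> a)" using ik eqm by arith
    have c3: "k \<le> l \<Longrightarrow> l - k \<le> a \<Longrightarrow> 2*a + i - j = 2*(a+k-l)" using ik eqm by arith
    have c4: "(i - 2*b \<le> j \<and> j \<le> i) = (k - b \<le> l \<and> l \<le> k)" using ik eqm by arith
    have c5: "l \<le> k \<Longrightarrow> i - j = 2*(k-l)" using ik eqm by arith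
    show ?thesis unfolding S k_def[symmetric] l_def[symmetric] Em c1 c2 c4 using True
      by (auto simp: c3 c5 cP cQ)
  next
    case False
    have o1: "i \<le> j \<Longrightarrow> j - i \<le> 2*a \<Longrightarrow> odd (2*a + i - j)" using False by presburger
    have o2: "j \<le> i \<Longrightarrow> odd (i - j)" using False by presburger
    show ?thesis unfolding S using False o1 o2 by (auto simp: cP cQ)
  qed
qed


lemma Emat_carrier[simp]: "Emat a b c1 c3 \<in> carrier_mat (a+b) (a+b)"
  unfolding Emat_def by simp

definition piN :: "nat \<Rightarrow> nat \<Rightarrow> nat" where
  "piN N t = (if t < N then 2*t else if t < 2*N then 2*(t-N)+1 else t)"

lemma piN_lt: "t < 2*N \<Longrightarrow> piN N t < 2*N"
  unfolding piN_def by auto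

lemma piN_permutes: "piN N permutes {0..<2*N}"
proof (rule bij_imp_permutes)
  have inj: "inj_on (piN N) {0..<2*N}"
    unfolding inj_on_def piN_def by (auto split: if_splits) presburger+
  have "piN N ` {0..<2*N} \<subseteq> {0..<2*N}" using piN_lt by auto
  then have "piN N ` {0..<2*N} = {0..<2*N}" using endo_inj_surj[OF _ _ inj] by auto
  then show "bij_betw (piN N) {0..<2*N} {0..<2*N}" using inj unfolding bij_betw_def by auto
  show "x \<notin> {0..<2*N} \<Longrightarrow> piN N x = x" for x unfolding piN_def by auto
qed

lemma resultant_even:
  fixes P Q :: "'a::idom poly"
  assumes dP: "degree P = 2*a" and dQ: "degree Q = 2*b"
    and cP: "\<And>i. coeff P i = (if even i then c1 (i div 2) else 0)"
    and cQ: "\<And>i. coeff Q i = (if even i then c3 (i div 2) else 0)"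
  shows "resultant P Q = (det (Emat a b c1 c3))^2"
proof -
  define N where "N = a + b"
  define E where "E = Emat a b c1 c3"
  have E: "E \<in> carrier_mat N N" unfolding E_def N_def by simp
  have S: "sylvester_mat P Q \<in> carrier_mat (2*N) (2*N)"
    using sylvester_carrier_mat[of P Q] unfolding dP dQ N_def by (simp add: algebra_simps)
  have eq: "mat (2*N) (2*N) (\<lambda>(u,v). sylvester_mat P Q $$ (piN N u, piN N v)) = four_block_mat E (0\<^sub>m N N) (0\<^sub>m N N) E"
  proof (rule eq_matI)
    fix u v assume u: "u < dim_row (four_block_mat E (0\<^sub>m N N) (0\<^sub>m N N) E)"
      and v: "v < dim_col (four_block_mat E (0\<^sub>m N N) (0\<^sub>m N N) E)"
    have u2: "u < 2*N" and v2: "v < 2*N" using u v E by auto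
    have pu: "piN N u < 2*(a+b)" and pv: "piN N v < 2*(a+b)" using piN_lt[OF u2] piN_lt[OF v2] unfolding N_def by auto
    have ent: "sylvester_mat P Q $$ (piN N u, piN N v) = (if even (piN N u) = even (piN N v) then E $$ (piN N u div 2, piN N v div 2) else 0)"
      unfolding E_def by (rule sylv_entry[OF dP dQ cP cQ pu pv])
    show "mat (2*N) (2*N) (\<lambda>(u,v). sylvester_mat P Q $$ (piN N u, piN N v)) $$ (u, v) = four_block_mat E (0\<^sub>m N N) (0\<^sub>m N N) E $$ (u, v)"
      unfolding index_mat(1)[OF u2 v2] case_prod_conv ent using u2 v2 E by (auto simp: piN_def)
  qed (use E in auto)
  have "resultant P Q = det (sylvester_mat P Q)" unfolding resultant_def ..
  also have "\<dots> = signof (piN N) * signof (piN N) * det (sylvester_mat P Q)" by (simp add: signof_sq)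
  also have "\<dots> = det (mat (2*N) (2*N) (\<lambda>(u,v). sylvester_mat P Q $$ (piN N u, piN N v)))"
    by (rule det_perm2[OF S piN_permutes piN_permutes, symmetric])
  also have "\<dots> = det E * det E" unfolding eq
    by (rule det_four_block_mat_upper_right_zero[OF E refl _ E]) simp
  finally show ?thesis unfolding E_def power2_eq_square .
qed


definition prow :: "nat \<Rightarrow> nat \<Rightarrow> nat \<Rightarrow> nat" where
  "prow K b i = (if i < K then (if even i then K - 1 - i div 2 else b - 1 - i div 2) else i)"

definition qcol :: "nat \<Rightarrow> nat \<Rightarrow> nat" where
  "qcol K j = (if j < K then K - 1 - j else j)"

lemma prow_permutes:
  assumes "b \<le> a" "a \<le> b + 1"
  shows "prow (a+b) b permutes {0..<a+b}"
proof (rule bij_imp_permutes)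
  let ?K = "a+b"
  have lt: "i < ?K \<Longrightarrow> prow ?K b i < ?K" for i unfolding prow_def using assms by auto
  have inj: "inj_on (prow ?K b) {0..<?K}"
  proof (rule inj_onI)
    fix x y assume x: "x \<in> {0..<?K}" and y: "y \<in> {0..<?K}" and e: "prow ?K b x = prow ?K b y"
    have x1: "x = 2 * (x div 2) + x mod 2" and y1: "y = 2 * (y div 2) + y mod 2" by simp_all
    have xe: "even x \<Longrightarrow> x div 2 < a" using x assms by (simp; presburger)
    have xo: "odd x \<Longrightarrow> x div 2 < b" using x assms by (simp; presburger)
    have ye: "even y \<Longrightarrow> y div 2 < a" using y assms by (simp; presburger)
    have yo: "odd y \<Longrightarrow> y div 2 < b" using y assms by (simp; presburger)
    have "x div 2 = y div 2 \<and> (even x = even y)"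
      using e x y xe xo ye yo unfolding prow_def by (auto split: if_splits)
    then show "x = y" using x1 y1 by (metis even_iff_mod_2_eq_zero odd_iff_mod_2_eq_one)
  qed
  have "prow ?K b ` {0..<?K} \<subseteq> {0..<?K}" using lt by auto
  then have "prow ?K b ` {0..<?K} = {0..<?K}" using endo_inj_surj[OF _ _ inj] by auto
  then show "bij_betw (prow ?K b) {0..<?K} {0..<?K}" using inj unfolding bij_betw_def by auto
  show "x \<notin> {0..<?K} \<Longrightarrow> prow ?K b x = x" for x unfolding prow_def by auto
qed

lemma qcol_permutes: "qcol K permutes {0..<K}"
proof (rule bij_imp_permutes)
  have inj: "inj_on (qcol K) {0..<K}"
    unfolding inj_on_def qcol_def by auto
  have "qcol K ` {0..<K} \<subseteq> {0..<K}" unfolding qcol_def by auto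
  then have "qcol K ` {0..<K} = {0..<K}" using endo_inj_surj[OF _ _ inj] by auto
  then show "bij_betw (qcol K) {0..<K} {0..<K}" using inj unfolding bij_betw_def by auto
  show "x \<notin> {0..<K} \<Longrightarrow> qcol K x = x" for x unfolding qcol_def by auto
qed

lemma Mmat_Emat:
  fixes c1 c3 :: "nat \<Rightarrow> 'a::comm_ring_1"
  assumes ab: "b \<le> a" "a \<le> b + 1"
    and v1: "\<And>j. j > a \<Longrightarrow> c1 j = 0" and v3: "\<And>j. j > b \<Longrightarrow> c3 j = 0"
  shows "(det (mat (a+b) (a+b) (\<lambda>(i,j). if even i then (if i div 2 \<le> j then c3 (j - i div 2) else 0)
            else (if i div 2 \<le> j then c1 (j - i div 2) else 0))))^2 = (det (Emat a b c1 c3))^2"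
proof -
  let ?K = "a+b"
  have eq: "mat ?K ?K (\<lambda>(i,j). if even i then (if i div 2 \<le> j then c3 (j - i div 2) else 0)
            else (if i div 2 \<le> j then c1 (j - i div 2) else 0))
     = mat ?K ?K (\<lambda>(i,j). Emat a b c1 c3 $$ (prow ?K b i, qcol ?K j))"
  proof (rule eq_matI)
    fix i j assume i: "i < dim_row (mat ?K ?K (\<lambda>(i,j). Emat a b c1 c3 $$ (prow ?K b i, qcol ?K j)))"
      and j: "j < dim_col (mat ?K ?K (\<lambda>(i,j). Emat a b c1 c3 $$ (prow ?K b i, qcol ?K j)))"
    then have i: "i < ?K" and j: "j < ?K" by auto
    define t where "t = i div 2"
    have pk: "prow ?K b i < ?K" "qcol ?K j < ?K" unfolding prow_def qcol_def using i j ab by auto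
    have Em: "Emat a b c1 c3 $$ (prow ?K b i, qcol ?K j) = (if prow ?K b i < b then (if prow ?K b i \<le> qcol ?K j \<and> qcol ?K j - prow ?K b i \<le> a then c1 (a + prow ?K b i - qcol ?K j) else 0)
      else (if prow ?K b i - b \<le> qcol ?K j \<and> qcol ?K j \<le> prow ?K b i then c3 (prow ?K b i - qcol ?K j) else 0))"
      unfolding Emat_def index_mat(1)[OF pk] by simp
    have key: "(if even i then (if t \<le> j then c3 (j - t) else 0) else (if t \<le> j then c1 (j - t) else 0)) = Emat a b c1 c3 $$ (prow ?K b i, qcol ?K j)"
    proof (cases "even i")
      case True
      then have i2: "i = 2*t" unfolding t_def by simp
      have tl: "t < a" using i i2 ab by arith
      have pr: "prow ?K b i = ?K - 1 - t" "qcol ?K j = ?K - 1 - j" unfolding prow_def qcol_def using i j True t_def by auto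
      show ?thesis unfolding Em unfolding pr using True tl j
        by (auto simp: v3 intro!: v3)
    next
      case False
      then have i2: "i = 2*t + 1" unfolding t_def by simp
      have tl: "t < b" using i i2 ab by arith
      have pr: "prow ?K b i = b - 1 - t" "qcol ?K j = ?K - 1 - j" unfolding prow_def qcol_def using i j False t_def by auto
      have e: "t \<le> j \<Longrightarrow> j \<le> a + t \<Longrightarrow> a + (b - 1 - t) - (a + b - 1 - j) = j - t" using tl j by arith
      show ?thesis unfolding Em unfolding pr using False tl j
        by (auto simp: e intro!: v1)
    qed
    show "mat ?K ?K (\<lambda>(i,j). if even i then (if i div 2 \<le> j then c3 (j - i div 2) else 0)
            else (if i div 2 \<le> j then c1 (j - i div 2) else 0)) $$ (i,j) =
          mat ?K ?K (\<lambda>(i,j). Emat a b c1 c3 $$ (prow ?K b i, qcol ?K j)) $$ (i,j)"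
      unfolding index_mat(1)[OF i j] case_prod_conv key[unfolded t_def] ..
  qed auto
  show ?thesis unfolding eq
    by (rule det_perm2_sq[OF _ prow_permutes[OF ab] qcol_permutes]) simp
qed


lemma poch_nat: "pochhammer (Suc d) m = fact m * ((d + m) choose m)"
proof -
  have "fact (d+m) = (fact d * pochhammer (Suc d) m :: nat)"
  proof -
    have pf: "pochhammer (Suc 0) k = (fact k::nat)" for k using pochhammer_fact[of k, where 'a=nat] by simp
    show ?thesis using pochhammer_product'[of "1::nat" d m] by (simp add: pf)
  qed
  moreover have "fact m * fact d * ((d+m) choose m) = (fact (d+m) :: nat)"
    using binomial_fact_lemma[of m "d+m"] by simp
  ultimately have "fact d * pochhammer (Suc d) m = fact d * (fact m * ((d + m) choose m))"
    by (simp add: ac_simps)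
  then show ?thesis by simp
qed

lemma tay_eq: "smult (rconst (1 / of_nat (fact m))) ((pderiv ^^ m) (f::qpoly poly)) = tay m f"
proof (rule poly_eqI)
  fix d
  have K: "rconst (1 / of_nat (fact m)) * (of_nat (fact m * ((d + m) choose m)) :: qpoly) = of_nat ((d + m) choose m)"
  proof -
    have "rconst (1 / of_nat (fact m)) * (of_nat (fact m * ((d + m) choose m)) :: qpoly)
       = (rconst (1 / of_nat (fact m)) * rconst (of_nat (fact m))) * of_nat ((d + m) choose m)"
      by (simp only: of_nat_mult rconst_of_nat mult.assoc)
    also have "rconst (1 / of_nat (fact m)) * rconst (of_nat (fact m)) = 1"
      unfolding rconst_mult by (simp add: rconst_1)
    finally show ?thesis by simp
  qed
  show "coeff (smult (rconst (1 / of_nat (fact m))) ((pderiv ^^ m) f)) d = coeff (tay m f) d"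
  proof -
    have P: "pochhammer (of_nat (Suc d)) m = (of_nat (fact m * ((d+m) choose m)) :: qpoly)"
      by (simp only: pochhammer_of_nat poch_nat)
    show ?thesis unfolding coeff_smult coeff_higher_pderiv P coeff_tay
      by (simp only: mult.assoc[symmetric] K)
  qed
qed


lemma coeff_genpoly: "coeff (genpoly n) i = (if i = n then 1 else 0) + (if i < n then ind i else 0)"
proof -
  have "coeff (\<Sum>j<n. monom (ind j) j) i = (\<Sum>j<n. if j = i then ind j else 0)"
    unfolding coeff_sum coeff_monom by simp
  also have "\<dots> = (if i < n then ind i else 0)" by simp
  finally show ?thesis unfolding genpoly_def coeff_add coeff_monom by simp
qed

lemma coeff_genpoly_n: "coeff (genpoly n) n = 1"
  by (simp add: coeff_genpoly)

lemma degree_genpoly: "degree (genpoly n) = n"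
proof (rule antisym)
  show "degree (genpoly n) \<le> n" by (rule degree_le) (auto simp: coeff_genpoly)
  show "n \<le> degree (genpoly n)" by (rule le_degree) (simp add: coeff_genpoly_n)
qed

lemma tay_vanish: "degree f < k \<Longrightarrow> tay k f = 0"
  by (rule poly_eqI) (simp add: coeff_tay coeff_eq_0)

lemma tay_nonzero:
  assumes "k \<le> degree f" "coeff f (degree f) = (1::qpoly)"
  shows "tay k f \<noteq> 0"
proof
  assume "tay k f = 0"
  then have "coeff (tay k f) (degree f - k) = 0" by simp
  then have "(of_nat (degree f choose k) :: qpoly) = 0" using assms by (simp add: coeff_tay)
  then have "(degree f choose k) = 0" by (simp only: of_nat_eq_0_iff)
  then show False using assms(1) by simp
qed

lemma phi_tay:
  assumes "f = genpoly n"
  shows "phi n f m = (if 1 \<le> m then tay (nat m) f else 0)"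
proof (cases "1 \<le> m \<and> m \<le> int n")
  case True then show ?thesis unfolding phi_def tay_eq by simp
next
  case False
  show ?thesis
  proof (cases "1 \<le> m")
    case True
    then have "n < nat m" using False by arith
    then show ?thesis using True False unfolding phi_def assms by (simp add: tay_vanish degree_genpoly)
  next
    case F2: False
    then show ?thesis unfolding phi_def by simp
  qed
qed

lemma Mentry_tay:
  assumes "f = genpoly n"
  shows "Mentry n f (Suc i) (Suc j) = (if even i then (if i div 2 \<le> j then tay (2*(j - i div 2)+2) f else 0)
          else (if i div 2 \<le> j then tay (2*(j - i div 2)+1) f else 0))"
proof (cases "even i")
  case True
  have e1: "(Suc i + 1) div 2 = i div 2 + 1" using True by presburger
  have e2: "(1 \<le> 2 * (int (Suc j) - int (i div 2 + 1)) + 2) = (i div 2 \<le> j)" by arith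
  have e3: "nat (2 * (int (Suc j) - int (i div 2 + 1)) + 2) = 2*(j - i div 2)+2" if h: "i div 2 \<le> j"
  proof -
    have "int (Suc j) - int (i div 2 + 1) = int (j - i div 2)" using h by simp
    moreover have "2 * int (j - i div 2) + 2 = int (2*(j - i div 2)+2)" by simp
    ultimately show ?thesis by (simp only: nat_int)
  qed
  show ?thesis unfolding Mentry_def phi_tay[OF assms] using True e1 e2 e3 by auto
next
  case False
  have e1: "Suc i div 2 = i div 2 + 1" using False by presburger
  have e2: "(1 \<le> 2 * (int (Suc j) - int (i div 2 + 1)) + 1) = (i div 2 \<le> j)" by arith
  have e3: "nat (2 * (int (Suc j) - int (i div 2 + 1)) + 1) = 2*(j - i div 2)+1" if h: "i div 2 \<le> j"
  proof -
    have "int (Suc j) - int (i div 2 + 1) = int (j - i div 2)" using h by simp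
    moreover have "2 * int (j - i div 2) + 1 = int (2*(j - i div 2)+1)" by simp
    ultimately show ?thesis by (simp only: nat_int)
  qed
  show ?thesis unfolding Mentry_def phi_tay[OF assms] using False e1 e2 e3 by auto
qed

theorem lemma6:
  fixes n :: nat and f :: "qpoly poly" and f1 f3 :: "qpoly poly poly"
  assumes "n \<ge> 3"
    and "f = genpoly n"
    and "(Yv - Xv) * f1 = eval1 f Yv - eval1 f Xv"
    and "(Yv - Xv)^2 * f3 =
           2 * (eval1 f Yv - 2 * eval1 f (smult [:rconst (1/2):] (Xv + Yv)) + eval1 f Xv)"
  shows "resultant (subst2 f1 (Xv - Yv) (Xv + Yv)) (subst2 f3 (Xv - Yv) (Xv + Yv))
           = (det (Mlead n f (n - 2)))^2"
proof -
  define a where "a = (n - 1) div 2"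
  define b where "b = (n - 2) div 2"
  define c1 where "c1 = (\<lambda>j. tay (2*j+1) f)"
  define c3 where "c3 = (\<lambda>j. tay (2*j+2) f)"
  define G1 where "G1 = subst2 f1 (Xv - Yv) (Xv + Yv)"
  define G3 where "G3 = subst2 f3 (Xv - Yv) (Xv + Yv)"
  have ab: "a + b = n - 2" "b \<le> a" "a \<le> b + 1" "2*a+1 \<le> n" "2*b+2 \<le> n" "n < 2*a+3" "n < 2*b+4"
    unfolding a_def b_def using assms(1) by presburger+
  have degf: "degree f = n" and lc: "coeff f (degree f) = 1"
    using assms(2) by (simp_all add: degree_genpoly coeff_genpoly_n)
  have v1: "\<And>j. j > a \<Longrightarrow> c1 j = 0" unfolding c1_def using ab degf by (intro tay_vanish) auto
  have v3: "\<And>j. j > b \<Longrightarrow> c3 j = 0" unfolding c3_def using ab degf by (intro tay_vanish) auto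
  have cG1: "\<And>i. coeff G1 i = (if even i then c1 (i div 2) else 0)"
    unfolding G1_def G1_coeff[OF assms(3)] c1_def by (auto elim!: evenE)
  have cG3: "\<And>i. coeff G3 i = (if even i then c3 (i div 2) else 0)"
    unfolding G3_def G3_coeff[OF assms(4)] c3_def by (auto elim!: evenE)
  have dG1: "degree G1 = 2*a"
  proof (rule antisym)
    show "degree G1 \<le> 2*a"
    proof (rule degree_le, intro allI impI)
      fix i assume "2*a < i"
      then show "coeff G1 i = 0" unfolding cG1 by (auto intro!: v1)
    qed
    have "tay (2*a+1) f \<noteq> 0" by (rule tay_nonzero[OF _ lc]) (use ab degf in simp)
    then have "coeff G1 (2*a) \<noteq> 0" unfolding cG1 c1_def by simp
    then show "2*a \<le> degree G1" by (rule le_degree)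
  qed
  have dG3: "degree G3 = 2*b"
  proof (rule antisym)
    show "degree G3 \<le> 2*b"
    proof (rule degree_le, intro allI impI)
      fix i assume "2*b < i"
      then show "coeff G3 i = 0" unfolding cG3 by (auto intro!: v3)
    qed
    have "tay (2*b+2) f \<noteq> 0" by (rule tay_nonzero[OF _ lc]) (use ab degf in simp)
    then have "coeff G3 (2*b) \<noteq> 0" unfolding cG3 c3_def by simp
    then show "2*b \<le> degree G3" by (rule le_degree)
  qed
  have R: "resultant G1 G3 = (det (Emat a b c1 c3))^2"
    by (rule resultant_even[OF dG1 dG3 cG1 cG3])
  have M: "Mlead n f (n - 2) = mat (a+b) (a+b) (\<lambda>(i,j). if even i then (if i div 2 \<le> j then c3 (j - i div 2) else 0)
            else (if i div 2 \<le> j then c1 (j - i div 2) else 0))"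
    unfolding Mlead_def ab(1)[symmetric]
    by (rule eq_matI) (auto simp: Mentry_tay[OF assms(2)] c1_def c3_def)
  show ?thesis
    unfolding G1_def[symmetric] G3_def[symmetric] R M by (rule Mmat_Emat[OF ab(2,3) v1 v3, symmetric])
qed

end
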